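(* For all integers $n\ge1$ and $k\ge1$, the number of $k$-quasi-Stirling permutations of size $n$ is $$|\overline{\mathcal{Q}}^k_n|=\frac{(kn)!}{((k-1)n+1)!}=n!\,C_{n,k},\qquad\text{where } C_{n,k}=\frac{1}{(k-1)n+1}\binom{kn}{n}.$$
   Context: A $k$-quasi-Stirling permutation of size $n$ is a permutation $\pi$ of the multiset $\{1^k,2^k,\dots,n^k\}$ (each of $1,\dots,n$ appearing exactly $k$ times) that avoids the patterns $1212$ and $2121$, i.e. there are no indices $i<j<m<\ell$ with $\pi_i=\pi_m\neq\pi_j=\pi_\ell$. $\overline{\mathcal{Q}}^k_n$ denotes the set of these permutations. *)

theory Defs
  imports Complex_Main "HOL-Library.Multiset"
begin

definition avoids_1212_2121 :: "nat list \<Rightarrow> bool" where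
  "avoids_1212_2121 w \<longleftrightarrow>
     \<not> (\<exists>i j m l. i < j \<and> j < m \<and> m < l \<and> l < length w \<and>
           w ! i = w ! m \<and> w ! j = w ! l \<and> w ! i \<noteq> w ! j)"

definition multiset_perms :: "nat \<Rightarrow> nat \<Rightarrow> nat list set" where
  "multiset_perms k n = {w. mset w = (\<Sum>i\<in>{1..n}. replicate_mset k i)}"

definition quasi_stirling :: "nat \<Rightarrow> nat \<Rightarrow> nat list set" where
  "quasi_stirling k n = {w \<in> multiset_perms k n. avoids_1212_2121 w}"

definition C_nk :: "nat \<Rightarrow> nat \<Rightarrow> real" where
  "C_nk n k = (1 / real ((k - 1) * n + 1)) * real ((k * n) choose n)"

end

theory Submission
  imports Defs
begin

definition pat :: "nat list \<Rightarrow> nat \<Rightarrow> nat \<Rightarrow> nat \<Rightarrow> nat \<Rightarrow> bool" where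
  "pat w i j p l \<longleftrightarrow> i < j \<and> j < p \<and> p < l \<and> l < length w \<and>
     w ! i = w ! p \<and> w ! j = w ! l \<and> w ! i \<noteq> w ! j"

lemma avoids_pat: "avoids_1212_2121 w \<longleftrightarrow> (\<forall>i j p l. \<not> pat w i j p l)"
  unfolding avoids_1212_2121_def pat_def by blast

lemma pat_Suc: "pat (y # v) (Suc i) (Suc j) (Suc p) (Suc l) = pat v i j p l"
  unfolding pat_def by auto

lemma av_tl: "avoids_1212_2121 (y # v) \<Longrightarrow> avoids_1212_2121 v"
  unfolding avoids_pat by (metis pat_Suc)

lemma av_Cons_same:
  assumes "v \<noteq> []" "hd v = x"
  shows "avoids_1212_2121 (x # v) \<longleftrightarrow> avoids_1212_2121 v"
proof
  assume "avoids_1212_2121 (x # v)" then show "avoids_1212_2121 v" by (rule av_tl)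
next
  assume av: "avoids_1212_2121 v"
  show "avoids_1212_2121 (x # v)" unfolding avoids_pat
  proof (intro allI notI)
    fix i j p l assume P: "pat (x # v) i j p l"
    show False
    proof (cases i)
      case 0
      then obtain j' p' l' where e: "j = Suc j'" "p = Suc p'" "l = Suc l'" using P unfolding pat_def
        by (metis gr0_implies_Suc less_trans)
      have v0: "v ! 0 = x" using assms by (simp add: hd_conv_nth)
      have "j' > 0" using P 0 e v0 unfolding pat_def by (metis gr0I nth_Cons_0 nth_Cons_Suc)
      then have "pat v 0 j' p' l'" using P 0 e v0 unfolding pat_def by auto
      then show False using av unfolding avoids_pat by blast
    next
      case (Suc i')
      then obtain j' p' l' where e: "j = Suc j'" "p = Suc p'" "l = Suc l'" using P unfolding pat_def
        by (metis gr0_implies_Suc less_trans zero_less_Suc)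
      then show False using P Suc av pat_Suc unfolding avoids_pat by metis
    qed
  qed
qed

lemma av_Cons_fresh:
  assumes "x \<notin> set v"
  shows "avoids_1212_2121 (x # v) \<longleftrightarrow> avoids_1212_2121 v"
proof
  assume "avoids_1212_2121 (x # v)" then show "avoids_1212_2121 v" by (rule av_tl)
next
  assume av: "avoids_1212_2121 v"
  show "avoids_1212_2121 (x # v)" unfolding avoids_pat
  proof (intro allI notI)
    fix i j p l assume P: "pat (x # v) i j p l"
    show False
    proof (cases i)
      case 0
      then obtain j' p' l' where e: "j = Suc j'" "p = Suc p'" "l = Suc l'" using P unfolding pat_def
        by (metis gr0_implies_Suc less_trans)
      then have "v ! p' = x" "p' < length v" using P 0 unfolding pat_def by auto
      then show False using assms by (metis nth_mem)
    next
      case (Suc i')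
      then obtain j' p' l' where e: "j = Suc j'" "p = Suc p'" "l = Suc l'" using P unfolding pat_def
        by (metis gr0_implies_Suc less_trans zero_less_Suc)
      then show False using P Suc av pat_Suc unfolding avoids_pat by metis
    qed
  qed
qed

definition rn :: "nat \<Rightarrow> nat \<Rightarrow> nat \<Rightarrow> nat" where
  "rn x a c = (if c = a then x else c)"

definition abx :: "nat \<Rightarrow> nat \<Rightarrow> nat list \<Rightarrow> bool" where
  "abx x a t \<longleftrightarrow> (\<forall>i j. i < j \<and> j < length t \<and> t ! i = x \<longrightarrow> t ! j \<noteq> a)"

lemma av_map:
  assumes ax: "a \<noteq> x" and t0: "t \<noteq> []" "hd t = a" and ab: "abx x a t"
  shows "avoids_1212_2121 (x # t) \<longleftrightarrow> avoids_1212_2121 (map (rn x a) t)"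
proof
  have ta: "t ! 0 = a" using t0 by (simp add: hd_conv_nth)
  assume av: "avoids_1212_2121 (x # t)"
  show "avoids_1212_2121 (map (rn x a) t)" unfolding avoids_pat
  proof (intro allI notI)
    fix i j p l assume P: "pat (map (rn x a) t) i j p l"
    then have o: "i < j" "j < p" "p < l" "l < length t" and
      e1: "rn x a (t!i) = rn x a (t!p)" and e2: "rn x a (t!j) = rn x a (t!l)"
      and ne: "rn x a (t!i) \<noteq> rn x a (t!j)"
      unfolding pat_def by auto
    have nab: False if "q < r" "r < length t" "t!q = x" "t!r = a" for q r
      using ab that unfolding abx_def by blast
    have np: False if "pat t q r s u" for q r s u
      using av that pat_Suc[of x t q r s u] unfolding avoids_pat by blast
    have np0: False if "pat (x # t) q r s u" for q r s u
      using av that unfolding avoids_pat by blast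
    show False
    proof (cases "rn x a (t!i) = x")
      case True
      then have tj: "t!j \<noteq> a" "t!j \<noteq> x" "t!l = t!j" using ne e2 unfolding rn_def by (auto split: if_splits)
      have ti: "t!i = a \<or> t!i = x" "t!p = a \<or> t!p = x" using True e1 unfolding rn_def by (auto split: if_splits)
      show False
      proof (cases "t!i = x")
        case True
        then have "t!p = x" using ti nab[of i p] o by auto
        then have "pat t i j p l" using o True tj unfolding pat_def by auto
        then show False by (rule np)
      next
        case False
        then have tia: "t!i = a" using ti by auto
        show False
        proof (cases "t!p = a")
          case True
          then have "pat t i j p l" using o tia tj unfolding pat_def by auto
          then show False by (rule np)
        next
          case False
          then have "t!p = x" using ti by auto
          then have "pat (x # t) 0 (Suc j) (Suc p) (Suc l)" using o tj unfolding pat_def by auto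
          then show False by (rule np0)
        qed
      qed
    next
      case False
      then have ti: "t!i \<noteq> a" "t!i \<noteq> x" "t!p = t!i" using e1 unfolding rn_def by (auto split: if_splits)
      show False
      proof (cases "rn x a (t!j) = x")
        case False
        then have "t!j \<noteq> a" "t!l = t!j" using e2 unfolding rn_def by (auto split: if_splits)
        then have "pat t i j p l" using o ti ne unfolding pat_def rn_def by (auto split: if_splits)
        then show False by (rule np)
      next
        case True
        then have tj: "t!j = a \<or> t!j = x" "t!l = a \<or> t!l = x" using e2 unfolding rn_def by (auto split: if_splits)
        show False
        proof (cases "t!j = x")
          case True
          then have "t!l = x" using tj nab[of j l] o by auto
          then have "pat t i j p l" using o True ti unfolding pat_def by auto
          then show False by (rule np)
        next
          case False
          then have tja: "t!j = a" using tj by auto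
          show False
          proof (cases "t!l = a")
            case True
            then have "pat t i j p l" using o tja ti unfolding pat_def by auto
            then show False by (rule np)
          next
            case False
            have "i \<noteq> 0"
            proof
              assume "i = 0" then show False using ta ti(1) by simp
            qed
            then have "pat t 0 i j p" using o ti tja ta unfolding pat_def by auto
            then show False by (rule np)
          qed
        qed
      qed
    qed
  qed
next
  have ta: "t ! 0 = a" using t0 by (simp add: hd_conv_nth)
  assume av: "avoids_1212_2121 (map (rn x a) t)"
  have nab: False if "q < r" "r < length t" "t!q = x" "t!r = a" for q r
    using ab that unfolding abx_def by blast
  have np: False if "pat (map (rn x a) t) q r s u" for q r s u
    using av that unfolding avoids_pat by blast
  show "avoids_1212_2121 (x # t)" unfolding avoids_pat
  proof (intro allI notI)
    fix i j p l assume P: "pat (x # t) i j p l"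
    show False
    proof (cases i)
      case 0
      then obtain j' p' l' where e: "j = Suc j'" "p = Suc p'" "l = Suc l'" using P unfolding pat_def
        by (metis gr0_implies_Suc less_trans)
      then have o: "j' < p'" "p' < l'" "l' < length t" "t!p' = x" "t!l' = t!j'" "t!j' \<noteq> x"
        using P 0 unfolding pat_def by auto
      have "t!l' \<noteq> a" using nab o by blast
      have "j' \<noteq> 0"
      proof
        assume "j' = 0" then show False using ta o(5) \<open>t!l' \<noteq> a\<close> by simp
      qed
      then have "0 < j'" by simp
      then have "pat (map (rn x a) t) 0 j' p' l'"
      proof -
        have tj: "t!j' \<noteq> a" using \<open>t!l' \<noteq> a\<close> o(5) by simp
        have "map (rn x a) t ! 0 = x" using ta t0(1) by (simp add: rn_def)
        moreover have "map (rn x a) t ! p' = x" using o(1-4) by (simp add: rn_def)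
        moreover have "map (rn x a) t ! j' = t!j'" using o(1-3) tj by (simp add: rn_def)
        moreover have "map (rn x a) t ! l' = t!j'" using o(1-3) tj o(5) by (simp add: rn_def)
        ultimately show ?thesis using o(1-3) o(6) \<open>0 < j'\<close> unfolding pat_def by simp
      qed
      then show False by (rule np)
    next
      case (Suc i')
      have jpl: "j = Suc (j - 1)" "p = Suc (p - 1)" "l = Suc (l - 1)" using P Suc unfolding pat_def by auto
      define j' p' l' where "j' = j - 1" "p' = p - 1" "l' = l - 1"
      have pt: "pat t i' j' p' l'" using P Suc jpl pat_Suc unfolding j'_p'_l'_def by metis
      then have o: "i' < j'" "j' < p'" "p' < l'" "l' < length t" "t!i' = t!p'" "t!j' = t!l'" "t!i' \<noteq> t!j'"
        unfolding pat_def by auto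
      have jl: "j' < length t" "p' < length t" using o(2-4) by linarith+
      have "\<not> (t!i' = x \<and> t!j' = a)" using nab[of i' j'] o(1) jl by blast
      moreover have "\<not> (t!i' = a \<and> t!j' = x)" using nab[of j' p'] o(2,5) jl by auto
      ultimately have "rn x a (t!i') \<noteq> rn x a (t!j')" using o(7) unfolding rn_def by auto
      then have "pat (map (rn x a) t) i' j' p' l'" using o unfolding pat_def by auto
      then show False by (rule np)
    qed
  qed
qed

fun ren :: "nat \<Rightarrow> nat \<Rightarrow> nat \<Rightarrow> nat list \<Rightarrow> nat list" where
  "ren x a 0 u = u"
| "ren x a (Suc c) [] = []"
| "ren x a (Suc c) (y # u) = (if y = x then a # ren x a c u else y # ren x a (Suc c) u)"

lemma abx_Nil: "abx x a []" unfolding abx_def by simp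

lemma abx_Cons: "abx x a (y # t) \<longleftrightarrow> ((y = x \<longrightarrow> a \<notin> set t) \<and> abx x a t)"
proof
  assume h: "abx x a (y # t)"
  have 1: "abx x a t" unfolding abx_def
  proof (intro allI impI)
    fix i j assume "i < j \<and> j < length t \<and> t ! i = x"
    then show "t ! j \<noteq> a" using h unfolding abx_def
      by (metis Suc_less_eq length_Cons nth_Cons_Suc)
  qed
  have 2: "a \<notin> set t" if "y = x"
  proof
    assume "a \<in> set t"
    then obtain j where "j < length t" "t ! j = a" by (metis in_set_conv_nth)
    then show False using h that unfolding abx_def
      by (metis Suc_less_eq length_Cons nth_Cons_0 nth_Cons_Suc zero_less_Suc)
  qed
  show "(y = x \<longrightarrow> a \<notin> set t) \<and> abx x a t" using 1 2 by blast
next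
  assume h: "(y = x \<longrightarrow> a \<notin> set t) \<and> abx x a t"
  show "abx x a (y # t)" unfolding abx_def
  proof (intro allI impI)
    fix i j assume H: "i < j \<and> j < length (y # t) \<and> (y # t) ! i = x"
    then obtain j' where j: "j = Suc j'" by (cases j) auto
    show "(y # t) ! j \<noteq> a"
    proof (cases i)
      case 0
      then have "y = x" using H by simp
      then have "a \<notin> set t" using h by blast
      then show ?thesis using H j by auto
    next
      case (Suc i')
      then show ?thesis using H j h unfolding abx_def by auto
    qed
  qed
qed

lemma abx_notin: "a \<notin> set t \<Longrightarrow> abx x a t"
  unfolding abx_def by (auto dest: nth_mem)

lemma map_rn_id: "a \<notin> set t \<Longrightarrow> map (rn x a) t = t"
  by (induction t) (auto simp: rn_def)

lemma ren_map: "abx x a t \<Longrightarrow> a \<noteq> x \<Longrightarrow> count_list t a = c \<Longrightarrow> ren x a c (map (rn x a) t) = t"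
proof (induction t arbitrary: c)
  case Nil
  then show ?case by simp
next
  case (Cons y t)
  have ab: "abx x a t" and yx: "y = x \<Longrightarrow> a \<notin> set t" using Cons.prems(1) abx_Cons by blast+
  show ?case
  proof (cases "y = a")
    case True
    then obtain c' where c: "c = Suc c'" "count_list t a = c'" using Cons.prems by auto
    then show ?thesis using Cons.IH[OF ab Cons.prems(2) c(2)] True by (simp add: rn_def)
  next
    case False
    note ya = False
    show ?thesis
    proof (cases c)
      case 0
      then have "a \<notin> set t" using Cons.prems(3) ya by (simp add: count_list_0_iff)
      then have "map (rn x a) t = t" by (rule map_rn_id)
      moreover have "rn x a y = y" using ya by (simp add: rn_def)
      ultimately show ?thesis using 0 by simp
    next
      case (Suc c')
      then have "y \<noteq> x" using yx Cons.prems(3) ya by (auto simp: count_list_0_iff)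
      then show ?thesis using Suc Cons.IH[OF ab Cons.prems(2)] Cons.prems(3) ya by (simp add: rn_def)
    qed
  qed
qed

lemma map_ren: "a \<notin> set u \<Longrightarrow> c \<le> count_list u x \<Longrightarrow> map (rn x a) (ren x a c u) = u"
proof (induction u arbitrary: c)
  case Nil
  then show ?case by (cases c) auto
next
  case (Cons y u)
  then show ?case
  proof (cases c)
    case 0
    have "map (rn x a) u = u" using Cons.prems by (simp add: map_rn_id)
    moreover have "rn x a y = y" using Cons.prems by (auto simp add: rn_def)
    ultimately show ?thesis using 0 by simp
  next
    case (Suc c')
    then show ?thesis using Cons by (auto simp: rn_def split: if_splits)
  qed
qed

lemma count_ren: "c \<le> count_list u x \<Longrightarrow> a \<noteq> x \<Longrightarrow>
   count_list (ren x a c u) y = (if y = x then count_list u x - c else if y = a then count_list u a + c else count_list u y)"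
proof (induction u arbitrary: c)
  case Nil
  then show ?case by (cases c) auto
next
  case (Cons z u)
  then show ?case
  proof (cases c)
    case 0
    then show ?thesis by simp
  next
    case (Suc c')
    then show ?thesis using Cons by (auto split: if_splits)
  qed
qed

lemma count_map_rn: "a \<noteq> x \<Longrightarrow>
   count_list (map (rn x a) t) y = (if y = x then count_list t x + count_list t a else if y = a then 0 else count_list t y)"
  by (induction t) (auto simp: rn_def)

lemma abx_ren: "a \<notin> set u \<Longrightarrow> a \<noteq> x \<Longrightarrow> abx x a (ren x a c u)"
proof (induction u arbitrary: c)
  case Nil
  then show ?case by (cases c) (auto simp: abx_Nil)
next
  case (Cons y u)
  then show ?case
  proof (cases c)
    case 0
    then show ?thesis using Cons.prems by (simp add: abx_notin)
  next
    case (Suc c')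
    then show ?thesis using Cons by (auto simp: abx_Cons)
  qed
qed

lemma ren_hd: "u \<noteq> [] \<Longrightarrow> hd u = x \<Longrightarrow> ren x a (Suc c) u = a # ren x a c (tl u)"
  by (cases u) auto

lemma abx_of_av:
  assumes av: "avoids_1212_2121 (x # t)" and t0: "t \<noteq> []" "hd t = a" and ax: "a \<noteq> x"
  shows "abx x a t"
  unfolding abx_def
proof (intro allI impI notI)
  fix i j assume H: "i < j \<and> j < length t \<and> t ! i = x" and tj: "t ! j = a"
  have ta: "t ! 0 = a" using t0 by (simp add: hd_conv_nth)
  have "i \<noteq> 0"
  proof
    assume "i = 0" then have "t ! 0 = x" using H by simp
    then show False using ta ax by simp
  qed
  then have "0 < i" by simp
  then have "pat (x # t) 0 1 (Suc i) (Suc j)" using H tj ta ax unfolding pat_def by auto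
  then show False using av unfolding avoids_pat by blast
qed

definition Gs :: "nat \<Rightarrow> nat set \<Rightarrow> nat \<Rightarrow> nat \<Rightarrow> nat list set" where
  "Gs k S x m = {w. w \<noteq> [] \<and> hd w = x \<and>
     (\<forall>y. count_list w y = (if y = x then m else if y \<in> S then k else 0)) \<and> avoids_1212_2121 w}"

lemma Gs_set: assumes w: "w \<in> Gs k S x m" shows "set w \<subseteq> insert x S"
proof
  fix y assume "y \<in> set w"
  then have "count_list w y \<noteq> 0" by (simp add: count_list_0_iff)
  moreover have "count_list w y = (if y = x then m else if y \<in> S then k else 0)"
    using w unfolding Gs_def by blast
  ultimately show "y \<in> insert x S" by (auto split: if_splits)
qed

lemma Gs_finite: assumes "finite S" shows "finite (Gs k S x m)"
proof -
  have "Gs k S x m \<subseteq> {xs. set xs \<subseteq> insert x S \<and> length xs \<le> card (insert x S) * (m + k)}"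
  proof
    fix w assume w: "w \<in> Gs k S x m"
    have s: "set w \<subseteq> insert x S" by (rule Gs_set[OF w])
    have "length w = sum (count_list w) (insert x S)" using sum_count_set[OF s] assms by simp
    also have "\<dots> \<le> card (insert x S) * (m + k)"
    proof -
      have "count_list w y \<le> m + k" for y using w unfolding Gs_def by auto
      then show ?thesis using sum_bounded_above[of "insert x S" "count_list w" "m+k"] by simp
    qed
    finally show "w \<in> {xs. set xs \<subseteq> insert x S \<and> length xs \<le> card (insert x S) * (m + k)}"
      using s by simp
  qed
  moreover have "finite {xs. set xs \<subseteq> insert x S \<and> length xs \<le> card (insert x S) * (m + k)}"
    by (rule finite_lists_length_le) (use assms in simp)
  ultimately show ?thesis by (rule finite_subset)
qed

lemma Gs_zero: "Gs k S x 0 = {}"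
  unfolding Gs_def by (auto simp: count_list_0_iff[symmetric] neq_Nil_conv)

lemma count_replicate: "count_list (replicate m x) y = (if y = x then m else 0)"
  by (induction m) auto

lemma av_replicate: "avoids_1212_2121 (replicate m x)"
  unfolding avoids_1212_2121_def by auto

lemma Gs_empty: assumes "m \<ge> 1" shows "Gs k {} x m = {replicate m x}"
proof
  show "Gs k {} x m \<subseteq> {replicate m x}"
  proof
    fix w assume w: "w \<in> Gs k {} x m"
    have s: "\<forall>y\<in>set w. y = x" using Gs_set[OF w] by auto
    have "length w = count_list w x"
      using sum_count_set[of w "{x}"] Gs_set[OF w] by simp
    also have "\<dots> = m" using w unfolding Gs_def by auto
    finally show "w \<in> {replicate m x}" using replicate_length_same[OF s] by simp
  qed
next
  show "{replicate m x} \<subseteq> Gs k {} x m"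
    using assms by (auto simp: Gs_def count_replicate av_replicate hd_replicate)
qed

lemma Gs_long:
  assumes w: "w \<in> Gs k S x m" and "S \<noteq> {}" "x \<notin> S" "k \<ge> 1"
  obtains t where "w = x # t" "t \<noteq> []"
proof -
  obtain s where s: "s \<in> S" using assms by blast
  obtain t where t: "w = x # t" using w unfolding Gs_def by (cases w) auto
  have "count_list w s = k" using w s assms(3) unfolding Gs_def by auto
  then have "s \<in> set w" using assms(4) by (metis count_notin not_one_le_zero)
  then have "t \<noteq> []" using t s assms(3) by auto
  then show ?thesis using t that by blast
qed

lemma bij1:
  assumes "m \<ge> 1" "S \<noteq> {}" "x \<notin> S" "k \<ge> 1"
  shows "bij_betw tl {w \<in> Gs k S x m. w ! 1 = x} (Gs k S x (m - 1))"
proof (rule bij_betw_byWitness[where f' = "Cons x"])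
  show "\<forall>w\<in>{w \<in> Gs k S x m. w ! 1 = x}. x # tl w = w"
    by (auto simp: Gs_def neq_Nil_conv)
  show "\<forall>v\<in>Gs k S x (m - 1). tl (x # v) = v" by simp
  show "tl ` {w \<in> Gs k S x m. w ! 1 = x} \<subseteq> Gs k S x (m - 1)"
  proof
    fix v assume "v \<in> tl ` {w \<in> Gs k S x m. w ! 1 = x}"
    then obtain w where w: "w \<in> Gs k S x m" "w ! 1 = x" "v = tl w" by blast
    obtain t where t: "w = x # t" "t \<noteq> []" using Gs_long[OF w(1) assms(2-4)] by blast
    have v: "v = t" using w t by simp
    have "hd t = x" using w(2) t by (simp add: hd_conv_nth)
    moreover have "avoids_1212_2121 t"
    proof -
      have "avoids_1212_2121 w" using w(1) unfolding Gs_def by blast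
      then show ?thesis using t(1) av_tl by simp
    qed
    moreover have "count_list t y = (if y = x then m - 1 else if y \<in> S then k else 0)" for y
    proof -
      have "count_list w y = (if y = x then m else if y \<in> S then k else 0)"
        using w(1) unfolding Gs_def by blast
      then show ?thesis using t assms(3) by (auto split: if_splits)
    qed
    ultimately show "v \<in> Gs k S x (m - 1)" using v t unfolding Gs_def by blast
  qed
  show "Cons x ` Gs k S x (m - 1) \<subseteq> {w \<in> Gs k S x m. w ! 1 = x}"
  proof
    fix w assume "w \<in> Cons x ` Gs k S x (m - 1)"
    then obtain v where v: "v \<in> Gs k S x (m - 1)" "w = x # v" by blast
    have v0: "v \<noteq> []" "hd v = x" using v unfolding Gs_def by auto
    have "w ! 1 = x" using v0 v(2) by (simp add: hd_conv_nth)
    moreover have "avoids_1212_2121 w" using v av_Cons_same[OF v0] unfolding Gs_def by blast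
    moreover have "count_list w y = (if y = x then m else if y \<in> S then k else 0)" for y
    proof -
      have "count_list v y = (if y = x then m - 1 else if y \<in> S then k else 0)"
        using v(1) unfolding Gs_def by blast
      then show ?thesis using v(2) assms(1,3) by (auto split: if_splits)
    qed
    ultimately show "w \<in> {w \<in> Gs k S x m. w ! 1 = x}" using v(2) unfolding Gs_def by simp
  qed
qed

lemma fw_lemma:
  assumes w: "w \<in> Gs k S x m" "w ! 1 = a" and h: "m \<ge> 1" "a \<in> S" "x \<notin> S" "k \<ge> 1"
  obtains t where "w = x # t" "t \<noteq> []" "hd t = a" "avoids_1212_2121 w" "abx x a t"
    "\<And>y. count_list t y = (if y = x then m - 1 else if y \<in> S then k else 0)"
proof -
  have ax: "a \<noteq> x" using h by auto
  have S0: "S \<noteq> {}" using h by auto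
  obtain t where t: "w = x # t" "t \<noteq> []" using Gs_long[OF w(1) S0 h(3,4)] by blast
  have ht: "hd t = a" using w(2) t by (simp add: hd_conv_nth)
  have av: "avoids_1212_2121 w" using w unfolding Gs_def by blast
  have ab: "abx x a t" using abx_of_av[OF _ t(2) ht ax] av t by simp
  have cw: "count_list w y = (if y = x then m else if y \<in> S then k else 0)" for y
    using w(1) unfolding Gs_def by blast
  have ct: "count_list t y = (if y = x then m - 1 else if y \<in> S then k else 0)" for y
    using cw[of y] t h(3) by (auto split: if_splits)
  show ?thesis using that t ht av ab ct by blast
qed

lemma bij2:
  assumes "m \<ge> 1" "a \<in> S" "x \<notin> S" "k \<ge> 1"
  shows "bij_betw (\<lambda>w. map (rn x a) (tl w)) {w \<in> Gs k S x m. w ! 1 = a} (Gs k (S - {a}) x (m + k - 1))"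
proof (rule bij_betw_byWitness[where f' = "\<lambda>u. x # ren x a k u"])
  have ax: "a \<noteq> x" using assms by auto
  have S0: "S \<noteq> {}" using assms by auto
  show "\<forall>w\<in>{w \<in> Gs k S x m. w ! 1 = a}. x # ren x a k (map (rn x a) (tl w)) = w"
  proof
    fix w assume "w \<in> {w \<in> Gs k S x m. w ! 1 = a}"
    then have w: "w \<in> Gs k S x m" "w ! 1 = a" by auto
    obtain t where f: "w = x # t" "t \<noteq> []" "hd t = a" "avoids_1212_2121 w" "abx x a t"
      "\<And>y. count_list t y = (if y = x then m - 1 else if y \<in> S then k else 0)"
      using fw_lemma[OF w assms] by blast
    have "count_list (tl w) a = k" using f(1) f(6)[of a] assms(2) ax by simp
    then have "ren x a k (map (rn x a) (tl w)) = tl w" using ren_map[OF _ ax] f(1) f(5) by simp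
    then show "x # ren x a k (map (rn x a) (tl w)) = w" using f(1) by simp
  qed
  show "\<forall>u\<in>Gs k (S - {a}) x (m + k - 1). map (rn x a) (tl (x # ren x a k u)) = u"
  proof
    fix u assume u: "u \<in> Gs k (S - {a}) x (m + k - 1)"
    have "a \<notin> set u" using Gs_set[OF u] ax by auto
    moreover have "k \<le> count_list u x" using u assms(1) unfolding Gs_def by auto
    ultimately show "map (rn x a) (tl (x # ren x a k u)) = u" using map_ren by simp
  qed
  show "(\<lambda>w. map (rn x a) (tl w)) ` {w \<in> Gs k S x m. w ! 1 = a} \<subseteq> Gs k (S - {a}) x (m + k - 1)"
  proof
    fix u assume "u \<in> (\<lambda>w. map (rn x a) (tl w)) ` {w \<in> Gs k S x m. w ! 1 = a}"
    then obtain w where w: "w \<in> Gs k S x m" "w ! 1 = a" "u = map (rn x a) (tl w)" by blast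
    obtain t where f: "w = x # t" "t \<noteq> []" "hd t = a" "avoids_1212_2121 w" "abx x a t"
      "\<And>y. count_list t y = (if y = x then m - 1 else if y \<in> S then k else 0)"
      using fw_lemma[OF w(1,2) assms] by blast
    have ut: "u = map (rn x a) t'" if "w = x # t'" for t' using w(3) that by simp
    have t: "w = x # t" "t \<noteq> []" using f by auto
    have u: "u = map (rn x a) t" using ut t by simp
    have "u \<noteq> []" using u t by simp
    moreover have "hd u = x" using u t f(3) by (simp add: hd_map rn_def)
    moreover have "avoids_1212_2121 u" using av_map[OF ax t(2)] f t u by simp
    moreover have "count_list u y = (if y = x then m + k - 1 else if y \<in> S - {a} then k else 0)" for y
    proof -
      have c: "count_list u y = (if y = x then count_list t x + count_list t a else if y = a then 0 else count_list t y)"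
        using count_map_rn[OF ax, of t y] u by simp
      have cx: "count_list t x = m - 1" using f(6)[of x] by simp
      have ca: "count_list t a = k" using f(6)[of a] ax assms(2) by simp
      show ?thesis
      proof (cases "y = x")
        case True then show ?thesis using c cx ca assms(1) by simp
      next
        case False
        then show ?thesis using c f(6)[of y] by (cases "y = a") simp_all
      qed
    qed
    ultimately show "u \<in> Gs k (S - {a}) x (m + k - 1)" unfolding Gs_def by blast
  qed
  show "(\<lambda>u. x # ren x a k u) ` Gs k (S - {a}) x (m + k - 1) \<subseteq> {w \<in> Gs k S x m. w ! 1 = a}"
  proof
    fix w assume "w \<in> (\<lambda>u. x # ren x a k u) ` Gs k (S - {a}) x (m + k - 1)"
    then obtain u where u: "u \<in> Gs k (S - {a}) x (m + k - 1)" "w = x # ren x a k u" by blast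
    have u0: "u \<noteq> []" "hd u = x" using u unfolding Gs_def by auto
    have anu: "a \<notin> set u" using Gs_set[OF u(1)] ax by auto
    have cu: "count_list u y = (if y = x then m + k - 1 else if y \<in> S - {a} then k else 0)" for y
      using u(1) unfolding Gs_def by blast
    have kl: "k \<le> count_list u x" using cu[of x] assms(1) by simp
    obtain k' where k': "k = Suc k'" using assms(4) by (cases k) auto
    have r: "ren x a k u = a # ren x a k' (tl u)" using ren_hd[OF u0] k' by simp
    have "w ! 1 = a" using u(2) r by simp
    moreover have "w \<noteq> []" "hd w = x" using u(2) by auto
    moreover have "count_list w y = (if y = x then m else if y \<in> S then k else 0)" for y
    proof -
      have c: "count_list (ren x a k u) y = (if y = x then count_list u x - k else if y = a then count_list u a + k else count_list u y)"
        using count_ren[OF kl ax, of y] by simp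
      have cw: "count_list w y = (if x = y then 1 else 0) + count_list (ren x a k u) y" using u(2) by simp
      have cx: "count_list u x = m + k - 1" using cu[of x] by simp
      have ca: "count_list u a = 0" using anu by simp
      show ?thesis
      proof (cases "y = x")
        case True then show ?thesis using c cw cx assms(1) by simp
      next
        case False
        show ?thesis
        proof (cases "y = a")
          case True then show ?thesis using c cw ca False assms(2) by simp
        next
          case False2: False
          then show ?thesis using c cw cu[of y] False by simp
        qed
      qed
    qed
    moreover have "avoids_1212_2121 w"
    proof -
      have "map (rn x a) (ren x a k u) = u" using map_ren[OF anu kl] .
      moreover have "abx x a (ren x a k u)" using abx_ren[OF anu ax] .
      moreover have "ren x a k u \<noteq> []" "hd (ren x a k u) = a" using r by auto
      ultimately have "avoids_1212_2121 (x # ren x a k u) = avoids_1212_2121 u"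
        using av_map[OF ax, of "ren x a k u"] by simp
      moreover have "avoids_1212_2121 u" using u(1) unfolding Gs_def by blast
      ultimately show ?thesis using u(2) by simp
    qed
    ultimately show "w \<in> {w \<in> Gs k S x m. w ! 1 = a}" unfolding Gs_def by blast
  qed
qed

lemma Gs_rec:
  assumes fin: "finite S" and S0: "S \<noteq> {}" and xS: "x \<notin> S" and k1: "k \<ge> 1" and m1: "m \<ge> 1"
  shows "card (Gs k S x m) = card (Gs k S x (m - 1)) + (\<Sum>a\<in>S. card (Gs k (S - {a}) x (m + k - 1)))"
proof -
  define A where "A = {w \<in> Gs k S x m. w ! 1 = x}"
  define B where "B = (\<lambda>a. {w \<in> Gs k S x m. w ! 1 = a})"
  have part: "Gs k S x m = A \<union> (\<Union>a\<in>S. B a)"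
  proof
    show "Gs k S x m \<subseteq> A \<union> (\<Union>a\<in>S. B a)"
    proof
      fix w assume w: "w \<in> Gs k S x m"
      obtain t where t: "w = x # t" "t \<noteq> []" using Gs_long[OF w S0 xS k1] by blast
      have "w ! 1 \<in> set w" using t by simp
      then have "w ! 1 \<in> insert x S" using Gs_set[OF w] by blast
      then show "w \<in> A \<union> (\<Union>a\<in>S. B a)" using w unfolding A_def B_def by auto
    qed
  next
    show "A \<union> (\<Union>a\<in>S. B a) \<subseteq> Gs k S x m" unfolding A_def B_def by auto
  qed
  have finG: "finite (Gs k S x m)" by (rule Gs_finite[OF fin])
  have fA: "finite A" unfolding A_def using finG by simp
  have fB: "\<forall>a\<in>S. finite (B a)" unfolding B_def using finG by simp
  have disj: "A \<inter> (\<Union>a\<in>S. B a) = {}" unfolding A_def B_def using xS by auto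
  have "card (Gs k S x m) = card A + card (\<Union>a\<in>S. B a)"
    using part card_Un_disjoint[OF fA _ disj] fB fin by simp
  also have "card (\<Union>a\<in>S. B a) = (\<Sum>a\<in>S. card (B a))"
    by (rule card_UN_disjoint[OF fin fB]) (auto simp: B_def)
  also have "card A = card (Gs k S x (m - 1))"
    unfolding A_def by (rule bij_betw_same_card[OF bij1[OF m1 S0 xS k1]])
  also have "(\<Sum>a\<in>S. card (B a)) = (\<Sum>a\<in>S. card (Gs k (S - {a}) x (m + k - 1)))"
  proof (rule sum.cong)
    fix a assume a: "a \<in> S"
    show "card (B a) = card (Gs k (S - {a}) x (m + k - 1))"
      unfolding B_def by (rule bij_betw_same_card[OF bij2[OF m1 a xS k1]])
  qed simp
  finally show ?thesis .
qed

lemma arith_id: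
  fixes m' n' k' :: nat
  shows "m' * (m' + k' * Suc n' + 1) + Suc n' * (m' + Suc k') = (m' + 1) * (m' + k' * Suc n' + Suc n')"
  by (simp add: algebra_simps)

lemma G_formula:
  assumes k1: "k \<ge> 1"
  shows "\<forall>S x m. finite S \<longrightarrow> card S = n \<longrightarrow> x \<notin> S \<longrightarrow>
    card (Gs k S x m) * fact (m + (k - 1) * n) = m * fact (m + k * n - 1)"
proof (induction n)
  case 0
  show ?case
  proof (intro allI impI)
    fix S :: "nat set" and x m :: nat assume "finite S" "card S = 0" "x \<notin> S"
    then have S: "S = {}" by simp
    show "card (Gs k S x m) * fact (m + (k - 1) * 0) = m * fact (m + k * 0 - 1)"
    proof (cases m)
      case 0 then show ?thesis by (simp add: Gs_zero)
    next
      case (Suc m')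
      then have "card (Gs k S x m) = 1" using S Gs_empty[of m k x] by simp
      then show ?thesis using Suc by simp
    qed
  qed
next
  case (Suc n')
  note outer = Suc.IH
  show ?case
  proof (intro allI impI)
    fix S :: "nat set" and x m :: nat assume fin: "finite S" and cS: "card S = Suc n'" and xS: "x \<notin> S"
    have S0: "S \<noteq> {}" using cS by auto
    obtain k' where k': "k = Suc k'" using k1 by (cases k) auto
    define F where "F m' = fact (m' + k * Suc n' - 1)" for m'
    show "card (Gs k S x m) * fact (m + (k - 1) * Suc n') = m * fact (m + k * Suc n' - 1)"
    proof (induction m)
      case 0 then show ?case by (simp add: Gs_zero)
    next
      case (Suc m')
      define c where "c = card (Gs k (S - {SOME a. a \<in> S}) x (Suc m' + k - 1))"
      have cards: "card (Gs k (S - {a}) x (Suc m' + k - 1)) * fact (m' + k' * Suc n' + 1)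
          = (m' + k) * fact (m' + k' * Suc n' + n')" if a: "a \<in> S" for a
      proof -
        have "finite (S - {a})" "card (S - {a}) = n'" "x \<notin> S - {a}" using fin cS xS a by auto
        then have "card (Gs k (S - {a}) x (Suc m' + k - 1)) * fact (Suc m' + k - 1 + (k - 1) * n')
          = (Suc m' + k - 1) * fact (Suc m' + k - 1 + k * n' - 1)" using outer by blast
        moreover have e1: "Suc m' + k - 1 + (k - 1) * n' = m' + k' * Suc n' + 1" using k' by simp
        moreover have e2: "Suc m' + k - 1 + k * n' - 1 = m' + k' * Suc n' + n'" using k' by (simp add: algebra_simps)
        moreover have e3: "Suc m' + k - 1 = m' + k" using k' by simp
        ultimately show ?thesis by metis
      qed
      have call: "card (Gs k (S - {a}) x (Suc m' + k - 1)) = c" if a: "a \<in> S" for a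
      proof -
        have "(SOME a. a \<in> S) \<in> S" using S0 by (simp add: some_in_eq)
        then have "c * fact (m' + k' * Suc n' + 1) = card (Gs k (S - {a}) x (Suc m' + k - 1)) * fact (m' + k' * Suc n' + 1)"
          using cards[OF a] cards[of "SOME a. a \<in> S"] unfolding c_def by simp
        then show ?thesis by simp
      qed
      have rec: "card (Gs k S x (Suc m')) = card (Gs k S x m') + Suc n' * c"
        using Gs_rec[OF fin S0 xS k1, of "Suc m'"] call cS by simp
      have c_eq: "c * fact (m' + k' * Suc n' + 1) = (m' + k) * fact (m' + k' * Suc n' + n')"
        using cards[of "SOME a. a \<in> S"] S0 unfolding c_def by (simp add: some_in_eq)
      have ih: "card (Gs k S x m') * fact (m' + k' * Suc n') = m' * fact (m' + k' * Suc n' + n')"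
        using Suc.IH k' by (simp add: algebra_simps)
      define A where "A = m' + k' * Suc n'"
      define Fv :: nat where "Fv = fact (A + n')"
      have ih': "card (Gs k S x m') * fact A = m' * Fv" using ih unfolding A_def Fv_def .
      have c': "c * (Suc A * fact A) = (m' + Suc k') * Fv" using c_eq k' unfolding A_def Fv_def
        by (simp add: algebra_simps)
      have "card (Gs k S x (Suc m')) * fact (Suc m' + (k - 1) * Suc n')
          = (card (Gs k S x m') + Suc n' * c) * (Suc A * fact A)"
        using rec k' unfolding A_def by (simp add: algebra_simps)
      also have "\<dots> = card (Gs k S x m') * fact A * Suc A + Suc n' * (c * (Suc A * fact A))"
        by (simp add: algebra_simps)
      also have "\<dots> = (m' * (A + 1) + Suc n' * (m' + Suc k')) * Fv"
        using ih' c' by (simp add: algebra_simps)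
      also have "\<dots> = (m' + 1) * (A + Suc n') * Fv"
        using arith_id[of m' k' n'] unfolding A_def by (simp add: algebra_simps)
      also have "\<dots> = Suc m' * fact (Suc m' + k * Suc n' - 1)"
      proof -
        have "Suc m' + k * Suc n' - 1 = Suc (A + n')" using k' unfolding A_def by (simp add: algebra_simps)
        then show ?thesis unfolding Fv_def by (simp add: algebra_simps)
      qed
      finally show ?case .
    qed
  qed
qed

lemma count_msum: "count (\<Sum>i\<in>{1..(n::nat)}. replicate_mset k i) y = (if y \<in> {1..n} then k else 0)"
proof -
  have "count (\<Sum>i\<in>{1..n}. replicate_mset k i) y = (\<Sum>a\<in>{1..n}. count (replicate_mset k a) y)"
    by (rule count_sum)
  also have "\<dots> = (\<Sum>a\<in>{1..n}. if a = y then k else 0)" by (rule sum.cong) auto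
  also have "\<dots> = (if y \<in> {1..n} then k else 0)" by (simp add: sum.delta)
  finally show ?thesis .
qed

lemma qs_bij:
  "bij_betw (Cons 0) (quasi_stirling k n) (Gs k {1..n} 0 1)"
proof (rule bij_betw_byWitness[where f' = tl])
  show "\<forall>w\<in>quasi_stirling k n. tl (0 # w) = w" by simp
  show "\<forall>v\<in>Gs k {1..n} 0 1. 0 # tl v = v" by (auto simp: Gs_def neq_Nil_conv)
  show "Cons 0 ` quasi_stirling k n \<subseteq> Gs k {1..n} 0 1"
  proof
    fix v assume "v \<in> Cons 0 ` quasi_stirling k n"
    then obtain w where w: "w \<in> quasi_stirling k n" "v = 0 # w" by blast
    have cw: "count_list w y = (if y \<in> {1..n} then k else 0)" for y
      using w(1) count_msum[where n=n and k=k and y=y] unfolding quasi_stirling_def multiset_perms_def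
      by (simp add: count_mset[symmetric])
    have "0 \<notin> set w" using cw[of 0] by (simp add: count_list_0_iff[symmetric])
    then have "avoids_1212_2121 v" using w av_Cons_fresh unfolding quasi_stirling_def by simp
    moreover have "count_list v y = (if y = 0 then 1 else if y \<in> {1..n} then k else 0)" for y
      using cw[of y] w(2) by auto
    ultimately show "v \<in> Gs k {1..n} 0 1" using w(2) unfolding Gs_def by simp
  qed
  show "tl ` Gs k {1..n} 0 1 \<subseteq> quasi_stirling k n"
  proof
    fix w assume "w \<in> tl ` Gs k {1..n} 0 1"
    then obtain v where v: "v \<in> Gs k {1..n} 0 1" "w = tl v" by blast
    have vw: "v = 0 # w" using v unfolding Gs_def by (auto simp: neq_Nil_conv)
    have cv: "count_list v y = (if y = 0 then 1 else if y \<in> {1..n} then k else 0)" for y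
      using v(1) unfolding Gs_def by blast
    have cw: "count_list w y = (if y \<in> {1..n} then k else 0)" for y
      using cv[of y] vw by (auto split: if_splits)
    have "mset w = (\<Sum>i\<in>{1..n}. replicate_mset k i)"
    proof (rule multiset_eqI)
      fix y show "count (mset w) y = count (\<Sum>i\<in>{1..n}. replicate_mset k i) y"
        using cw[of y] count_msum[where n=n and k=k and y=y] by (simp add: count_mset)
    qed
    moreover have "0 \<notin> set w" using cw[of 0] by (simp add: count_list_0_iff[symmetric])
    moreover have "avoids_1212_2121 v" using v unfolding Gs_def by blast
    ultimately show "w \<in> quasi_stirling k n" using av_Cons_fresh vw
      unfolding quasi_stirling_def multiset_perms_def by simp
  qed
qed

theorem theorem4p3:
  fixes n k :: nat
  assumes "n \<ge> 1" and "k \<ge> 1"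
  shows "real (card (quasi_stirling k n)) = fact (k * n) / fact ((k - 1) * n + 1)
    \<and> real (card (quasi_stirling k n)) = fact n * C_nk n k"
proof -
  have c: "card (quasi_stirling k n) = card (Gs k {1..n} 0 1)"
    by (rule bij_betw_same_card[OF qs_bij])
  have fs: "finite {1..n}" "card {1..n} = n" "(0::nat) \<notin> {1..n}" by auto
  have "card (Gs k {1..n} 0 1) * fact (1 + (k - 1) * n) = 1 * fact (1 + k * n - 1)"
    using G_formula[OF assms(2), of n] fs by blast
  then have "card (quasi_stirling k n) * fact ((k - 1) * n + 1) = (fact (k * n) :: nat)"
    using c by (simp add: add.commute)
  then have "real (card (quasi_stirling k n)) * fact ((k - 1) * n + 1) = fact (k * n)"
    by (metis of_nat_fact of_nat_mult)
  then have 1: "real (card (quasi_stirling k n)) = fact (k * n) / fact ((k - 1) * n + 1)"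
    by (rule eq_divide_imp[rotated]) (rule fact_nonzero)
  have kn: "n \<le> k * n" using assms by simp
  have "k * n - n = (k - 1) * n" by (simp add: diff_mult_distrib)
  then have b: "real (k * n choose n) = fact (k * n) / (fact n * fact ((k - 1) * n))"
    using binomial_fact[OF kn] by simp
  define N where "N = (k - 1) * n"
  have f: "(fact (N + 1) :: real) = real (N + 1) * fact N" by (simp only: fact_Suc Suc_eq_plus1[symmetric] of_nat_Suc)
  have a: "real (N + 1) \<noteq> 0" by (simp only: of_nat_eq_0_iff)
  have bb: "(fact n :: real) \<noteq> 0" "(fact N :: real) \<noteq> 0" by auto
  have "fact n * C_nk n k = fact n * (1 / real (N + 1) * (fact (k * n) / (fact n * fact N)))"
    unfolding C_nk_def b N_def by simp
  also have "\<dots> = fact (k * n) / (real (N + 1) * fact N)"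
    using a bb by (simp add: divide_simps del: of_nat_add of_nat_Suc)
  also have "\<dots> = fact (k * n) / fact (N + 1)" by (simp only: f)
  finally have "fact n * C_nk n k = fact (k * n) / fact ((k - 1) * n + 1)" unfolding N_def .
  then show ?thesis using 1 by simp
qed

end
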